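(* Let $m \le n$ and $1 \le k \le m$. Let $X$ be a normal operator on $\mathcal{H}_n \otimes \mathcal{H}_m$ with spectral decomposition $X = \sum_i \lambda_i |v_i\rangle\langle v_i|$, where $\{|v_i\rangle\}$ is an orthonormal basis of eigenvectors and $\lambda_i$ are the corresponding eigenvalues. Then \[ \|X\|_{S(k)} \le \sum_i |\lambda_i|\, \big\||v_i\rangle\big\|_{s(k)}^2. \]
   Context: $\mathcal{H}_d = \mathbb{C}^d$ and $m\le n$. $SR$ denotes Schmidt rank, i.e. the number of nonzero singular values of the coefficient matrix of a vector in $\mathcal{H}_n\otimes\mathcal{H}_m$. $\big\||v\rangle\big\|_{s(k)} := \sup\{|\langle w|v\rangle| : |w\rangle \text{ unit}, SR(|w\rangle)\le k\}$. By a known result this equals the square root of the sum of squares of the $k$ largest Schmidt coefficients of $|v\rangle$. $\|X\|_{S(k)} := \sup\{|\langle w|X|v\rangle| : |v\rangle,|w\rangle \text{ unit}, SR(|v\rangle),SR(|w\rangle)\le k\}$. *)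

theory Defs
  imports "HOL-Analysis.Analysis"
begin

text \<open>Vectors in H_n (x) H_m are modelled as complex^('n \<times> 'm), with CARD('n) = n,
  CARD('m) = m; the entry at (i,j) is the coefficient of |i>|j>.\<close>

definition cinner :: "complex^'a \<Rightarrow> complex^'a \<Rightarrow> complex" where
  "cinner w v = (\<Sum>a\<in>UNIV. cnj (w $ a) * v $ a)"

definition coeff_mat :: "complex^('n::finite \<times> 'm::finite) \<Rightarrow> complex^'m^'n" where
  "coeff_mat v = (\<chi> i j. v $ (i, j))"

text \<open>Schmidt rank = number of nonzero singular values of the coefficient matrix = its rank.\<close>
definition schmidt_rank :: "complex^('n::finite \<times> 'm::finite) \<Rightarrow> nat" where
  "schmidt_rank v = rank (coeff_mat v)"

definition s_norm :: "nat \<Rightarrow> complex^('n::finite \<times> 'm::finite) \<Rightarrow> real" where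
  "s_norm k v = Sup {cmod (cinner w v) | w. norm w = 1 \<and> schmidt_rank w \<le> k}"

definition S_norm :: "nat \<Rightarrow> complex^('n::finite \<times> 'm::finite)^('n \<times> 'm) \<Rightarrow> real" where
  "S_norm k X = Sup {cmod (cinner w (X *v v)) | v w.
      norm v = 1 \<and> norm w = 1 \<and> schmidt_rank v \<le> k \<and> schmidt_rank w \<le> k}"

definition adjoint_mat :: "complex^'a^'b \<Rightarrow> complex^'b^'a" where
  "adjoint_mat X = (\<chi> i j. cnj (X $ j $ i))"

definition outer :: "complex^'a \<Rightarrow> complex^'a \<Rightarrow> complex^'a^'a" where
  "outer u v = (\<chi> a b. u $ a * cnj (v $ b))"

end

theory Submission
  imports Defs
begin

lemma sr_axis: "schmidt_rank (axis (i0::'n::finite, j0::'m::finite) (1::complex)) \<le> 1"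
proof -
  let ?A = "coeff_mat (axis (i0, j0) (1::complex))"
  have "rows ?A \<subseteq> vec.span {axis j0 1}"
  proof
    fix r assume "r \<in> rows ?A"
    then obtain i where r: "r = row i ?A" by (auto simp: rows_def)
    show "r \<in> vec.span {axis j0 1}"
    proof (cases "i = i0")
      case True
      then have "r = axis j0 1" by (auto simp: r row_def coeff_mat_def axis_def vec_eq_iff)
      then show ?thesis by (simp add: vec.span_base)
    next
      case False
      then have "r = 0" by (auto simp: r row_def coeff_mat_def axis_def vec_eq_iff)
      then show ?thesis by (simp add: vec.span_zero)
    qed
  qed
  then have "vec.dim (rows ?A) \<le> card {axis j0 (1::complex)}" by (rule vec.dim_le_card) auto
  then show ?thesis by (simp add: schmidt_rank_def row_rank_def_gen)
qed

lemma cs: "cmod (cinner w v) \<le> norm w * norm v"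
proof -
  have "cmod (cinner w v) \<le> (\<Sum>a\<in>UNIV. cmod (w $ a) * cmod (v $ a))"
    unfolding cinner_def by (rule order_trans[OF norm_sum]) (simp add: norm_mult)
  also have "\<dots> \<le> L2_set (\<lambda>a. cmod (w $ a)) UNIV * L2_set (\<lambda>a. cmod (v $ a)) UNIV"
    using L2_set_mult_ineq[of "\<lambda>a. cmod (w $ a)" "\<lambda>a. cmod (v $ a)" UNIV] by simp
  finally show ?thesis by (simp add: norm_vec_def)
qed

lemma cinner_sym: "cmod (cinner w v) = cmod (cinner v w)"
proof -
  have "cinner w v = cnj (cinner v w)" by (simp add: cinner_def mult.commute)
  then show ?thesis by simp
qed

lemma triple:
  fixes c v :: "_ \<Rightarrow> 'r::comm_ring_1" and p q :: "_ \<Rightarrow> _ \<Rightarrow> 'r"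
  assumes "finite A" "finite B" "finite I"
  shows "(\<Sum>a\<in>A. c a * (\<Sum>b\<in>B. (\<Sum>i\<in>I. l i * p i a * q i b) * v b))
       = (\<Sum>i\<in>I. l i * (\<Sum>a\<in>A. c a * p i a) * (\<Sum>b\<in>B. q i b * v b))"
proof -
  have "(\<Sum>a\<in>A. c a * (\<Sum>b\<in>B. (\<Sum>i\<in>I. l i * p i a * q i b) * v b))
      = (\<Sum>a\<in>A. \<Sum>b\<in>B. \<Sum>i\<in>I. l i * (c a * p i a) * (q i b * v b))"
    by (simp add: sum_distrib_left sum_distrib_right mult.assoc mult.left_commute)
  also have "\<dots> = (\<Sum>a\<in>A. \<Sum>i\<in>I. \<Sum>b\<in>B. l i * (c a * p i a) * (q i b * v b))"
    by (rule sum.cong[OF refl], rule sum.swap)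
  also have "\<dots> = (\<Sum>i\<in>I. \<Sum>a\<in>A. \<Sum>b\<in>B. l i * (c a * p i a) * (q i b * v b))"
    by (rule sum.swap)
  also have "\<dots> = (\<Sum>i\<in>I. l i * (\<Sum>a\<in>A. c a * p i a) * (\<Sum>b\<in>B. q i b * v b))"
  proof (rule sum.cong[OF refl])
    fix i
    have "l i * (\<Sum>a\<in>A. c a * p i a) * (\<Sum>b\<in>B. q i b * v b)
        = l i * ((\<Sum>a\<in>A. c a * p i a) * (\<Sum>b\<in>B. q i b * v b))" by (rule mult.assoc)
    also have "\<dots> = l i * (\<Sum>a\<in>A. \<Sum>b\<in>B. (c a * p i a) * (q i b * v b))" by (simp only: sum_product)
    also have "\<dots> = (\<Sum>a\<in>A. \<Sum>b\<in>B. l i * ((c a * p i a) * (q i b * v b)))" by (simp only: sum_distrib_left)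
    finally show "(\<Sum>a\<in>A. \<Sum>b\<in>B. l i * (c a * p i a) * (q i b * v b)) = l i * (\<Sum>a\<in>A. c a * p i a) * (\<Sum>b\<in>B. q i b * v b)"
      by (simp only: mult.assoc)
  qed
  finally show ?thesis .
qed

lemma expand:
  fixes X :: "complex^'a::finite^'a" and vs :: "'a \<Rightarrow> complex^'a" and lam :: "'a \<Rightarrow> complex"
  assumes "X = (\<Sum>i\<in>UNIV. (\<chi> a b. lam i * outer (vs i) (vs i) $ a $ b))"
  shows "cinner w (X *v v) = (\<Sum>i\<in>UNIV. lam i * cinner w (vs i) * cinner (vs i) v)"
proof -
  have Xab: "X $ a $ b = (\<Sum>i\<in>UNIV. lam i * vs i $ a * cnj (vs i $ b))" for a b
    unfolding assms sum_component by (simp add: outer_def ac_simps)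
  have "cinner w (X *v v) = (\<Sum>a\<in>UNIV. cnj (w $ a) * (\<Sum>b\<in>UNIV. (\<Sum>i\<in>UNIV. lam i * vs i $ a * cnj (vs i $ b)) * v $ b))"
    by (simp add: cinner_def matrix_vector_mult_def Xab)
  also have "\<dots> = (\<Sum>i\<in>UNIV. lam i * cinner w (vs i) * cinner (vs i) v)"
    unfolding cinner_def by (rule triple) auto
  finally show ?thesis .
qed

theorem proposition4p11:
  fixes X :: "complex^('n::finite \<times> 'm::finite)^('n \<times> 'm)"
    and vs :: "('n \<times> 'm) \<Rightarrow> complex^('n \<times> 'm)"
    and lam :: "('n \<times> 'm) \<Rightarrow> complex"
    and k :: nat
  assumes "CARD('m) \<le> CARD('n)"
    and "1 \<le> k" and "k \<le> CARD('m)"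
    and "X ** adjoint_mat X = adjoint_mat X ** X"
    and "\<And>i j. cinner (vs i) (vs j) = (if i = j then 1 else 0)"
    and "X = (\<Sum>i\<in>UNIV. (\<chi> a b. lam i * outer (vs i) (vs i) $ a $ b))"
  shows "S_norm k X \<le> (\<Sum>i\<in>UNIV. cmod (lam i) * (s_norm k (vs i))^2)"
proof -
  have bound: "cmod (cinner w (vs i)) \<le> s_norm k (vs i)"
    if "norm w = 1" "schmidt_rank w \<le> k" for w i
    unfolding s_norm_def
  proof (rule cSup_upper)
    show "cmod (cinner w (vs i)) \<in> {cmod (cinner w (vs i)) |w. norm w = 1 \<and> schmidt_rank w \<le> k}"
      using that by blast
    show "bdd_above {cmod (cinner w (vs i)) |w. norm w = 1 \<and> schmidt_rank w \<le> k}"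
      proof (rule bdd_aboveI[of _ "norm (vs i)"])
      fix x assume "x \<in> {cmod (cinner w (vs i)) |w. norm w = 1 \<and> schmidt_rank w \<le> k}"
      then obtain w where "x = cmod (cinner w (vs i))" "norm w = 1" by blast
      then show "x \<le> norm (vs i)" using cs[of w "vs i"] by simp
    qed
  qed
  define e :: "complex^('n \<times> 'm)" where "e = axis (undefined, undefined) 1"
  have e1: "schmidt_rank e \<le> 1" unfolding e_def by (rule sr_axis)
  have e: "norm e = 1" "schmidt_rank e \<le> k"
    using e1 assms(2) unfolding e_def by (simp_all add: norm_axis_1)
  show ?thesis
    unfolding S_norm_def
  proof (rule cSup_least)
    show "{cmod (cinner w (X *v v)) |v w. norm v = 1 \<and> norm w = 1 \<and> schmidt_rank v \<le> k \<and> schmidt_rank w \<le> k} \<noteq> {}"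
      using e by blast
  next
    fix x assume "x \<in> {cmod (cinner w (X *v v)) |v w. norm v = 1 \<and> norm w = 1 \<and> schmidt_rank v \<le> k \<and> schmidt_rank w \<le> k}"
    then obtain v w where x: "x = cmod (cinner w (X *v v))" and vw: "norm v = 1" "norm w = 1" "schmidt_rank v \<le> k" "schmidt_rank w \<le> k"
      by blast
    have "x = cmod (\<Sum>i\<in>UNIV. lam i * cinner w (vs i) * cinner (vs i) v)"
      using x expand[OF assms(6)] by simp
    also have "\<dots> \<le> (\<Sum>i\<in>UNIV. cmod (lam i * cinner w (vs i) * cinner (vs i) v))"
      by (rule norm_sum)
    also have "\<dots> \<le> (\<Sum>i\<in>UNIV. cmod (lam i) * (s_norm k (vs i))^2)"
    proof (rule sum_mono)
      fix i
      have a: "cmod (cinner w (vs i)) \<le> s_norm k (vs i)" by (rule bound[OF vw(2) vw(4)])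
      have b: "cmod (cinner (vs i) v) \<le> s_norm k (vs i)" unfolding cinner_sym[of "vs i" v] by (rule bound[OF vw(1) vw(3)])
      have "cmod (cinner w (vs i)) * cmod (cinner (vs i) v) \<le> s_norm k (vs i) * s_norm k (vs i)"
        by (rule mult_mono[OF a b]) (auto intro: order_trans[OF norm_ge_zero a])
      then have "cmod (lam i) * (cmod (cinner w (vs i)) * cmod (cinner (vs i) v)) \<le> cmod (lam i) * (s_norm k (vs i))^2"
        by (simp add: mult_left_mono power2_eq_square)
      then show "cmod (lam i * cinner w (vs i) * cinner (vs i) v) \<le> cmod (lam i) * (s_norm k (vs i))^2"
        by (simp add: norm_mult mult.assoc)
    qed
    finally show "x \<le> (\<Sum>i\<in>UNIV. cmod (lam i) * (s_norm k (vs i))^2)" .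
  qed
qed

end
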